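(* Let $\mathcal E$ be an exchangeability system for a noncommutative probability space $(\mathcal A,\phi)$, let $n\ge 1$ and $X_1,\dots,X_n\in\mathcal A$. Suppose there is a subset $I\subseteq[n]$ with $I\neq\emptyset$ and $I\neq[n]$ such that the families $(X_j)_{j\in I}$ and $(X_j)_{j\in[n]\setminus I}$ are $\mathcal E$-independent. Then $K_n(X_1,\dots,X_n)=0$.
   Context: A noncommutative probability space is a pair $(\mathcal A,\phi)$ of a complex unital algebra $\mathcal A$ and a unital linear functional $\phi$. An exchangeability system $\mathcal E$ for $(\mathcal A,\phi)$ consists of a noncommutative probability space $(\mathcal U,\tilde\phi)$ and a family $(\iota_k)_{k\in\mathbb N}$ of embeddings (injective unital algebra homomorphisms) $\iota_k:\mathcal A\to\mathcal A_k\subseteq\mathcal U$ with $\tilde\phi\circ\iota_k=\phi$; write $X^{(k)}=\iota_k(X)$. It is required that for all $X_1,\dots,X_n\in\mathcal A$, all indices $i_1,\dots,i_n\in\mathbb N$ and every bijection $\sigma$ of $\mathbb N$, $\tilde\phi(X_1^{(i_1)}\cdots X_n^{(i_n)})=\tilde\phi(X_1^{(\sigma(i_1))}\cdots X_n^{(\sigma(i_n))})$. Thus this value depends only on the kernel of $h:j\mapsto i_j$ (the partition of $[n]=\{1,\dots,n\}$ into the level sets of $h$); for a partition $\pi$ of $[n]$ this value is denoted $\phi_\pi(X_1,\dots,X_n)$. For a primitive $n$-th root of unity $\omega$ put $X_j^\omega=\sum_{k=1}^n\omega^kX_j^{(k)}$ and define the cumulant $K_n(X_1,\dots,X_n)=\frac1n\tilde\phi(X_1^\omega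 X_2^\omega\cdots X_n^\omega)$. Subalgebras $\mathcal B,\mathcal C\subseteq\mathcal A$ are $\mathcal E$-independent if for all $X_1,\dots,X_n\in\mathcal B\cup\mathcal C$ and every decomposition $[n]=I\sqcup J$ with $X_i\in\mathcal B$ for $i\in I$ and $X_i\in\mathcal C$ for $i\in J$, one has $\phi_\pi(X_1,\dots,X_n)=\phi_{\pi'}(X_1,\dots,X_n)$ whenever the partitions $\pi,\pi'$ of $[n]$ satisfy $\pi|_I=\pi'|_I$ and $\pi|_J=\pi'|_J$. Two families of elements of $\mathcal A$ are $\mathcal E$-independent if the subalgebras they generate are. *)

theory Defs
  imports Complex_Main "HOL-Library.Disjoint_Sets"
begin

definition complex_unital_algebra :: "(complex \<Rightarrow> 'a::ring_1 \<Rightarrow> 'a) \<Rightarrow> bool" where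
  "complex_unital_algebra sc \<longleftrightarrow>
     (\<forall>c x y. sc c (x + y) = sc c x + sc c y) \<and>
     (\<forall>c d x. sc (c + d) x = sc c x + sc d x) \<and>
     (\<forall>c d x. sc (c * d) x = sc c (sc d x)) \<and>
     (\<forall>x. sc 1 x = x) \<and>
     (\<forall>c x y. sc c (x * y) = sc c x * y) \<and>
     (\<forall>c x y. sc c (x * y) = x * sc c y)"

definition ncps :: "(complex \<Rightarrow> 'a::ring_1 \<Rightarrow> 'a) \<Rightarrow> ('a \<Rightarrow> complex) \<Rightarrow> bool" where
  "ncps sc phi \<longleftrightarrow> complex_unital_algebra sc \<and>
     (\<forall>x y. phi (x + y) = phi x + phi y) \<and>
     (\<forall>c x. phi (sc c x) = c * phi x) \<and>
     phi 1 = 1"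

definition alg_embedding :: "(complex \<Rightarrow> 'a::ring_1 \<Rightarrow> 'a) \<Rightarrow> (complex \<Rightarrow> 'u::ring_1 \<Rightarrow> 'u)
    \<Rightarrow> ('a \<Rightarrow> 'u) \<Rightarrow> bool" where
  "alg_embedding sA sU f \<longleftrightarrow> inj f \<and> f 1 = 1 \<and>
     (\<forall>x y. f (x + y) = f x + f y) \<and>
     (\<forall>x y. f (x * y) = f x * f y) \<and>
     (\<forall>c x. f (sA c x) = sU c (f x))"

definition oprod :: "nat \<Rightarrow> (nat \<Rightarrow> 'a::monoid_mult) \<Rightarrow> 'a" where
  "oprod n f = prod_list (map f [0..<n])"

text \<open>Exchangeability system (U, phit, iota) for (A, phi). Positions 1..n of the
 paper are 0..n-1 here; copies are indexed by all of nat.\<close>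
definition exch_system :: "(complex \<Rightarrow> 'a::ring_1 \<Rightarrow> 'a) \<Rightarrow> ('a \<Rightarrow> complex)
    \<Rightarrow> (complex \<Rightarrow> 'u::ring_1 \<Rightarrow> 'u) \<Rightarrow> ('u \<Rightarrow> complex) \<Rightarrow> (nat \<Rightarrow> 'a \<Rightarrow> 'u) \<Rightarrow> bool" where
  "exch_system sA phi sU phit iota \<longleftrightarrow>
     ncps sA phi \<and> ncps sU phit \<and>
     (\<forall>k. alg_embedding sA sU (iota k) \<and> (\<forall>x. phit (iota k x) = phi x)) \<and>
     (\<forall>n X i \<sigma>. bij (\<sigma> :: nat \<Rightarrow> nat) \<longrightarrow>
        phit (oprod n (\<lambda>j. iota (i j) (X j))) = phit (oprod n (\<lambda>j. iota (\<sigma> (i j)) (X j))))"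

definition kernel_part :: "nat \<Rightarrow> (nat \<Rightarrow> nat) \<Rightarrow> nat set set" where
  "kernel_part n h = (\<lambda>i. {j. j < n \<and> h j = h i}) ` {..<n}"

text \<open>phi_pi (X_1,...,X_n): the common value for any index map with kernel pi.\<close>
definition phi_part :: "('u::ring_1 \<Rightarrow> complex) \<Rightarrow> (nat \<Rightarrow> 'a \<Rightarrow> 'u) \<Rightarrow> nat
    \<Rightarrow> nat set set \<Rightarrow> (nat \<Rightarrow> 'a) \<Rightarrow> complex" where
  "phi_part phit iota n \<pi> X =
     phit (oprod n (\<lambda>j. iota ((SOME h. kernel_part n h = \<pi>) j) (X j)))"

definition restrict_part :: "'b set set \<Rightarrow> 'b set \<Rightarrow> 'b set set" where
  "restrict_part \<pi> I = (\<lambda>B. B \<inter> I) ` \<pi> - {{}}"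

inductive_set gen_alg :: "(complex \<Rightarrow> 'a::ring_1 \<Rightarrow> 'a) \<Rightarrow> 'a set \<Rightarrow> 'a set"
  for sc S where
  base: "x \<in> S \<Longrightarrow> x \<in> gen_alg sc S"
| one: "1 \<in> gen_alg sc S"
| add: "x \<in> gen_alg sc S \<Longrightarrow> y \<in> gen_alg sc S \<Longrightarrow> x + y \<in> gen_alg sc S"
| mult: "x \<in> gen_alg sc S \<Longrightarrow> y \<in> gen_alg sc S \<Longrightarrow> x * y \<in> gen_alg sc S"
| scal: "x \<in> gen_alg sc S \<Longrightarrow> sc c x \<in> gen_alg sc S"

definition E_indep :: "('u::ring_1 \<Rightarrow> complex) \<Rightarrow> (nat \<Rightarrow> 'a \<Rightarrow> 'u) \<Rightarrow> 'a set \<Rightarrow> 'a set \<Rightarrow> bool" where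
  "E_indep phit iota B C \<longleftrightarrow>
     (\<forall>n X I J \<pi> \<pi>'. I \<union> J = {..<n} \<and> I \<inter> J = {} \<and>
        (\<forall>i\<in>I. X i \<in> B) \<and> (\<forall>j\<in>J. X j \<in> C) \<and>
        partition_on {..<n} \<pi> \<and> partition_on {..<n} \<pi>' \<and>
        restrict_part \<pi> I = restrict_part \<pi>' I \<and> restrict_part \<pi> J = restrict_part \<pi>' J
        \<longrightarrow> phi_part phit iota n \<pi> X = phi_part phit iota n \<pi>' X)"

definition prim_root :: "nat \<Rightarrow> complex \<Rightarrow> bool" where
  "prim_root n \<omega> \<longleftrightarrow> \<omega> ^ n = 1 \<and> (\<forall>k. 0 < k \<and> k < n \<longrightarrow> \<omega> ^ k \<noteq> 1)"

definition cumulant :: "(complex \<Rightarrow> 'u::ring_1 \<Rightarrow> 'u) \<Rightarrow> ('u \<Rightarrow> complex) \<Rightarrow> (nat \<Rightarrow> 'a \<Rightarrow> 'u)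
    \<Rightarrow> complex \<Rightarrow> nat \<Rightarrow> (nat \<Rightarrow> 'a) \<Rightarrow> complex" where
  "cumulant sU phit iota \<omega> n X =
     phit (oprod n (\<lambda>j. \<Sum>k=1..n. sU (\<omega> ^ k) (iota k (X j)))) / of_nat n"

end

theory Submission
  imports Defs "HOL-Library.FuncSet"
begin

lemma cua_add: assumes "complex_unital_algebra sc" shows "sc c (x + y) = sc c x + sc c y"
  using assms unfolding complex_unital_algebra_def by blast

lemma cua_one: assumes "complex_unital_algebra sc" shows "sc 1 x = x"
  using assms unfolding complex_unital_algebra_def by blast

lemma cua_zero: assumes "complex_unital_algebra sc" shows "sc c 0 = 0"
proof -
  have "sc c (0 + 0) = sc c 0 + sc c 0" using assms unfolding complex_unital_algebra_def by blast
  then show ?thesis by simp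
qed

lemma cua_sum: assumes "complex_unital_algebra sc" shows "sc c (sum f A) = (\<Sum>x\<in>A. sc c (f x))"
proof (induction A rule: infinite_finite_induct)
  case (infinite A) then show ?case using cua_zero[OF assms] by simp
next
  case empty then show ?case using cua_zero[OF assms] by simp
next
  case (insert x F) then show ?case using cua_add[OF assms] by simp
qed

lemma cua_mult: assumes "complex_unital_algebra sc" shows "sc c x * sc d y = sc (c * d) (x * y)"
proof -
  have "sc c x * sc d y = sc c (x * sc d y)" using assms unfolding complex_unital_algebra_def by metis
  also have "\<dots> = sc c (sc d (x * y))" using assms unfolding complex_unital_algebra_def by metis
  also have "\<dots> = sc (c * d) (x * y)" using assms unfolding complex_unital_algebra_def by metis
  finally show ?thesis .
qed

lemma oprod_Suc: "oprod (Suc m) f = oprod m f * f m"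
  by (simp add: oprod_def)

lemma oprod_cong: "(\<And>j. j < m \<Longrightarrow> f j = g j) \<Longrightarrow> oprod m f = oprod m g"
  unfolding oprod_def by (intro arg_cong[where f=prod_list] map_cong) auto

lemma expand:
  assumes cua: "complex_unital_algebra sc"
  shows "oprod m (\<lambda>j. \<Sum>k\<in>K. sc (c k) (F j k)) =
    (\<Sum>h\<in>PiE {..<m} (\<lambda>_. K). sc (\<Prod>j<m. c (h j)) (oprod m (\<lambda>j. F j (h j))))"
proof (induction m)
  case 0
  then show ?case using cua_one[OF cua] by (simp add: oprod_def)
next
  case (Suc m)
  let ?P = "PiE {..<m} (\<lambda>_. K)"
  have "oprod (Suc m) (\<lambda>j. \<Sum>k\<in>K. sc (c k) (F j k)) =
     (\<Sum>h\<in>?P. sc (\<Prod>j<m. c (h j)) (oprod m (\<lambda>j. F j (h j)))) * (\<Sum>k\<in>K. sc (c k) (F m k))"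
    by (simp add: oprod_Suc Suc)
  also have "\<dots> = (\<Sum>h\<in>?P. \<Sum>k\<in>K. sc ((\<Prod>j<m. c (h j)) * c k) (oprod m (\<lambda>j. F j (h j)) * F m k))"
    unfolding sum_distrib_right by (simp add: sum_distrib_left cua_mult[OF cua])
  also have "\<dots> = (\<Sum>k\<in>K. \<Sum>h\<in>?P. sc ((\<Prod>j<m. c (h j)) * c k) (oprod m (\<lambda>j. F j (h j)) * F m k))"
    by (rule sum.swap)
  also have "\<dots> = (\<Sum>p\<in>K \<times> ?P. (\<lambda>h. sc (\<Prod>j<Suc m. c (h j)) (oprod (Suc m) (\<lambda>j. F j (h j)))) ((\<lambda>(y, g). g(m := y)) p))"
  proof -
    have "(\<Sum>k\<in>K. \<Sum>h\<in>?P. sc ((\<Prod>j<m. c (h j)) * c k) (oprod m (\<lambda>j. F j (h j)) * F m k))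
       = (\<Sum>k\<in>K. \<Sum>h\<in>?P. (\<lambda>h. sc (\<Prod>j<Suc m. c (h j)) (oprod (Suc m) (\<lambda>j. F j (h j)))) (h(m := k)))"
    proof (intro sum.cong refl)
      fix k h
      have "(\<Prod>j<Suc m. c ((h(m := k)) j)) = (\<Prod>j<m. c (h j)) * c k"
        by (simp add: prod.lessThan_Suc)
      moreover have "oprod (Suc m) (\<lambda>j. F j ((h(m := k)) j)) = oprod m (\<lambda>j. F j (h j)) * F m k"
        by (simp add: oprod_Suc, rule arg_cong2[where f="(*)"], rule oprod_cong, simp_all)
      ultimately show "sc ((\<Prod>j<m. c (h j)) * c k) (oprod m (\<lambda>j. F j (h j)) * F m k) =
        (\<lambda>h. sc (\<Prod>j<Suc m. c (h j)) (oprod (Suc m) (\<lambda>j. F j (h j)))) (h(m := k))" by simp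
    qed
    also have "\<dots> = (\<Sum>p\<in>K \<times> ?P. (\<lambda>h. sc (\<Prod>j<Suc m. c (h j)) (oprod (Suc m) (\<lambda>j. F j (h j)))) ((\<lambda>(y, g). g(m := y)) p))"
      by (simp only: sum.cartesian_product split_def)
    finally show ?thesis .
  qed
  also have "\<dots> = (\<Sum>h\<in>(\<lambda>(y, g). g(m := y)) ` (K \<times> ?P). sc (\<Prod>j<Suc m. c (h j)) (oprod (Suc m) (\<lambda>j. F j (h j))))"
    by (rule sum.reindex[symmetric, unfolded comp_def]) (rule inj_combinator, simp)
  also have "(\<lambda>(y, g). g(m := y)) ` (K \<times> ?P) = PiE {..<Suc m} (\<lambda>_. K)"
    by (simp add: lessThan_Suc PiE_insert_eq)
  finally show ?case .
qed

lemma ker_eq_rel: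
  assumes "kernel_part n h = kernel_part n g" "i < n" "j < n"
  shows "(h i = h j) = (g i = g j)"
proof -
  have "{j. j < n \<and> h j = h i} \<in> kernel_part n h"
    unfolding kernel_part_def by (rule image_eqI[OF refl]) (simp add: assms(2))
  then have "{j. j < n \<and> h j = h i} \<in> kernel_part n g"
    by (simp only: assms(1))
  then have "{j. j < n \<and> h j = h i} \<in> (\<lambda>i. {j. j < n \<and> g j = g i}) ` {..<n}"
    by (simp only: kernel_part_def)
  then obtain k where k1: "k \<in> {..<n}" and k: "{j. j < n \<and> h j = h i} = {j. j < n \<and> g j = g k}"
    by (rule imageE)
  have "i \<in> {j. j < n \<and> h j = h i}" using assms(2) by simp
  then have "i \<in> {j. j < n \<and> g j = g k}" by (simp only: k)
  then have gi: "g i = g k" by simp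
  have "(h j = h i) = (j \<in> {j. j < n \<and> h j = h i})" using assms(3) by simp
  also have "\<dots> = (j \<in> {j. j < n \<and> g j = g k})" by (simp only: k)
  also have "\<dots> = (g j = g k)" using assms(3) by simp
  finally have E: "(h j = h i) = (g j = g k)" .
  show ?thesis
  proof
    assume "h i = h j" then show "g i = g j" using E gi by simp
  next
    assume "g i = g j" then show "h i = h j" using E gi by simp
  qed
qed

lemma perm_exists:
  fixes n :: nat and h g :: "nat \<Rightarrow> nat"
  assumes rel: "\<forall>i<n. \<forall>j<n. (h i = h j) = (g i = g j)"
  shows "\<exists>\<sigma>::nat\<Rightarrow>nat. bij \<sigma> \<and> (\<forall>j<n. \<sigma> (h j) = g j)"
proof -
  define A where "A = h ` {..<n}"
  define B where "B = g ` {..<n}"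
  define f where "f x = g (SOME j. j < n \<and> h j = x)" for x
  have fh: "f (h j) = g j" if "j < n" for j
  proof -
    have "\<exists>j'. j' < n \<and> h j' = h j" using that by blast
    then have "(SOME j'. j' < n \<and> h j' = h j) < n \<and> h (SOME j'. j' < n \<and> h j' = h j) = h j"
      by (rule someI_ex)
    then show ?thesis unfolding f_def using rel that by blast
  qed
  have finA: "finite A" unfolding A_def by simp
  have finB: "finite B" unfolding B_def by simp
  have bf: "bij_betw f A B"
  proof (rule bij_betw_imageI)
    show "inj_on f A"
    proof (rule inj_onI)
      fix x y assume "x \<in> A" "y \<in> A" "f x = f y"
      then obtain i j where "i < n" "j < n" "x = h i" "y = h j" "g i = g j"
        unfolding A_def using fh by auto
      then show "x = y" using rel by blast
    qed
    show "f ` A = B" unfolding A_def B_def using fh by (auto simp: image_iff)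
  qed
  then have cAB: "card A = card B" by (rule bij_betw_same_card)
  have "card (B - A) = card (A - B)"
    using cAB finA finB by (simp add: card_Diff_subset_Int Int_commute)
  then obtain e where be: "bij_betw e (B - A) (A - B)"
    using finite_same_card_bij[of "B - A" "A - B"] finA finB by auto
  define \<sigma> where "\<sigma> x = (if x \<in> A then f x else if x \<in> B then e x else x)" for x
  have b1: "bij_betw \<sigma> A B" using bf by (rule bij_betw_cong[THEN iffD1, rotated]) (simp add: \<sigma>_def)
  have b2: "bij_betw \<sigma> (B - A) (A - B)" using be by (rule bij_betw_cong[THEN iffD1, rotated]) (simp add: \<sigma>_def)
  have b3: "bij_betw \<sigma> (- (A \<union> B)) (- (A \<union> B))"
    using bij_betw_id[of "- (A \<union> B)"] by (rule bij_betw_cong[THEN iffD1, rotated]) (simp add: \<sigma>_def)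
  have "bij_betw \<sigma> (A \<union> (B - A) \<union> - (A \<union> B)) (B \<union> (A - B) \<union> - (A \<union> B))"
    by (rule bij_betw_combine[OF bij_betw_combine[OF b1 b2]  b3]) auto+
  moreover have "A \<union> (B - A) \<union> - (A \<union> B) = UNIV" "B \<union> (A - B) \<union> - (A \<union> B) = UNIV" by auto
  ultimately have "bij \<sigma>" by simp
  moreover have "\<forall>j<n. \<sigma> (h j) = g j" using fh by (simp add: \<sigma>_def A_def)
  ultimately show ?thesis by blast
qed

lemma phit_rel:
  fixes iota :: "nat \<Rightarrow> 'a::ring_1 \<Rightarrow> 'u::ring_1" and X :: "nat \<Rightarrow> 'a" and n :: nat
    and h g :: "nat \<Rightarrow> nat"
  assumes ex: "exch_system sA phi sU phit iota"
    and rel: "\<forall>i<n. \<forall>j<n. (h i = h j) = (g i = g j)"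
  shows "phit (oprod n (\<lambda>j. iota (h j) (X j))) = phit (oprod n (\<lambda>j. iota (g j) (X j)))"
proof -
  obtain \<sigma> :: "nat \<Rightarrow> nat" where bs: "bij \<sigma>" and sg: "\<forall>j<n. \<sigma> (h j) = g j"
    using perm_exists[OF rel] by blast
  have "phit (oprod n (\<lambda>j. iota (h j) (X j))) = phit (oprod n (\<lambda>j. iota (\<sigma> (h j)) (X j)))"
    using ex bs unfolding exch_system_def by blast
  also have "oprod n (\<lambda>j. iota (\<sigma> (h j)) (X j)) = oprod n (\<lambda>j. iota (g j) (X j))"
    by (rule oprod_cong) (simp add: sg)
  finally show ?thesis .
qed

lemma phit_phi_part:
  fixes iota :: "nat \<Rightarrow> 'a::ring_1 \<Rightarrow> 'u::ring_1" and X :: "nat \<Rightarrow> 'a" and n :: nat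
    and h :: "nat \<Rightarrow> nat"
  assumes ex: "exch_system sA phi sU phit iota"
  shows "phit (oprod n (\<lambda>j. iota (h j) (X j))) = phi_part phit iota n (kernel_part n h) X"
proof -
  define g where "g = (SOME g. kernel_part n g = kernel_part n h)"
  have "kernel_part n g = kernel_part n h" unfolding g_def by (rule someI[of _ h]) (rule refl)
  then have rel: "\<forall>i<n. \<forall>j<n. (h i = h j) = (g i = g j)"
    using ker_eq_rel[of n h g] by (metis)
  show ?thesis unfolding phi_part_def g_def[symmetric] by (rule phit_rel[OF ex rel])
qed

lemma partition_kernel: "partition_on {..<n} (kernel_part n h)"
  unfolding partition_on_def disjoint_def kernel_part_def by auto

lemma restrict_kernel:
  fixes h :: "nat \<Rightarrow> nat"
  assumes "I \<subseteq> {..<n}"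
  shows "restrict_part (kernel_part n h) I = (\<lambda>i. {j\<in>I. h j = h i}) ` I"
proof
  show "restrict_part (kernel_part n h) I \<subseteq> (\<lambda>i. {j\<in>I. h j = h i}) ` I"
  proof
    fix B assume "B \<in> restrict_part (kernel_part n h) I"
    then obtain i where "i < n" and Bd: "B = {j. j < n \<and> h j = h i} \<inter> I" and "B \<noteq> {}"
      unfolding restrict_part_def kernel_part_def by auto
    then obtain i' where i': "i' \<in> B" by blast
    then have "B = {j\<in>I. h j = h i'}" using assms Bd by auto
    moreover have "i' \<in> I" using i' Bd by auto
    ultimately show "B \<in> (\<lambda>i. {j\<in>I. h j = h i}) ` I" by blast
  qed
next
  show "(\<lambda>i. {j\<in>I. h j = h i}) ` I \<subseteq> restrict_part (kernel_part n h) I"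
  proof
    fix B assume "B \<in> (\<lambda>i. {j\<in>I. h j = h i}) ` I"
    then obtain i where i: "i \<in> I" "B = {j\<in>I. h j = h i}" by blast
    have "B = {j. j < n \<and> h j = h i} \<inter> I" using i assms by auto
    moreover have "i < n" using i assms by auto
    moreover have "B \<noteq> {}" using i by auto
    ultimately show "B \<in> restrict_part (kernel_part n h) I"
      unfolding restrict_part_def kernel_part_def by auto
  qed
qed

lemma phit_sum:
  assumes "ncps sc phit" shows "phit (sum f A) = (\<Sum>x\<in>A. phit (f x))"
proof (induction A rule: infinite_finite_induct)
  have z: "phit 0 = 0"
  proof -
    have "phit (0 + 0) = phit 0 + phit 0" using assms unfolding ncps_def by blast
    then show ?thesis by simp
  qed
  { case (infinite A) then show ?case using z by simp }
  { case empty then show ?case using z by simp }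
next
  case (insert x F)
  have "phit (f x + sum f F) = phit (f x) + phit (sum f F)" using assms unfolding ncps_def by blast
  then show ?case using insert by simp
qed

lemma rot_omega:
  fixes \<omega> :: complex
  assumes "\<omega> ^ n = 1" "v \<in> {1..n}"
  shows "\<omega> ^ (v mod n + 1) = \<omega> * \<omega> ^ v"
proof (cases "v < n")
  case True then show ?thesis by simp
next
  case False then have "v = n" using assms by auto
  then show ?thesis using assms by simp
qed

lemma rot_inj:
  assumes "v \<in> {1..n}" "u \<in> {1..(n::nat)}" "v mod n + 1 = u mod n + 1"
  shows "v = u"
proof -
  have "v mod n = u mod n" using assms(3) by simp
  moreover have "v mod n = (if v = n then 0 else v)" using assms(1) by auto
  moreover have "u mod n = (if u = n then 0 else u)" using assms(2) by auto
  ultimately show ?thesis using assms(1,2) by (auto split: if_splits)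
qed

theorem proposition2p2:
  fixes sA :: "complex \<Rightarrow> 'a::ring_1 \<Rightarrow> 'a" and phi :: "'a \<Rightarrow> complex"
    and sU :: "complex \<Rightarrow> 'u::ring_1 \<Rightarrow> 'u" and phit :: "'u \<Rightarrow> complex"
    and iota :: "nat \<Rightarrow> 'a \<Rightarrow> 'u"
    and n :: nat and X :: "nat \<Rightarrow> 'a" and I :: "nat set" and \<omega> :: complex
  assumes "exch_system sA phi sU phit iota"
    and "n \<ge> 1"
    and "I \<subseteq> {..<n}" and "I \<noteq> {}" and "I \<noteq> {..<n}"
    and "E_indep phit iota (gen_alg sA (X ` I)) (gen_alg sA (X ` ({..<n} - I)))"
    and "prim_root n \<omega>"
  shows "cumulant sU phit iota \<omega> n X = 0"
proof -
  note ex = assms(1)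
  have nc: "ncps sU phit" using ex unfolding exch_system_def by blast
  have cua: "complex_unital_algebra sU" using nc unfolding ncps_def by blast
  have wn: "\<omega> ^ n = 1" using assms(7) unfolding prim_root_def by blast
  define P where "P = PiE {..<n} (\<lambda>_. {1..n::nat})"
  define Y where "Y h = oprod n (\<lambda>j. iota (h j) (X j))" for h
  define w where "w h = (\<Prod>j<n. \<omega> ^ (h j))" for h :: "nat \<Rightarrow> nat"
  define S where "S = (\<Sum>h\<in>P. w h * phit (Y h))"
  define T where "T h = (\<lambda>j. if j \<in> I then h j mod n + 1 else h j)" for h :: "nat \<Rightarrow> nat"
  have finP: "finite P" unfolding P_def by (simp add: finite_PiE)
  have main: "phit (oprod n (\<lambda>j. \<Sum>k=1..n. sU (\<omega> ^ k) (iota k (X j)))) = S"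
  proof -
    have eq: "oprod n (\<lambda>j. \<Sum>k=1..n. sU (\<omega> ^ k) (iota k (X j))) = (\<Sum>h\<in>P. sU (w h) (Y h))"
      unfolding P_def w_def Y_def
      by (rule expand[OF cua])
    have sc: "\<forall>c x. phit (sU c x) = c * phit x" using nc unfolding ncps_def by blast
    show ?thesis unfolding S_def eq phit_sum[OF nc] using sc by simp
  qed
have injT: "inj_on T P"
  proof (rule inj_onI)
    fix h h' assume hP: "h \<in> P" "h' \<in> P" and eq: "T h = T h'"
    show "h = h'"
    proof
      fix j
      show "h j = h' j"
      proof (cases "j \<in> I")
        case True
        then have "j < n" using assms(3) by auto
        then have "h j \<in> {1..n}" "h' j \<in> {1..n}"
          using PiE_mem[OF hP(1)[unfolded P_def], of j] PiE_mem[OF hP(2)[unfolded P_def], of j] by simp_all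
        moreover have "h j mod n + 1 = h' j mod n + 1" using fun_cong[OF eq, of j] True unfolding T_def by simp
        ultimately show ?thesis by (rule rot_inj)
      next
        case False
        then show ?thesis using fun_cong[OF eq, of j] unfolding T_def by simp
      qed
    qed
  qed
  have TP: "T ` P = P"
  proof (rule endo_inj_surj[OF finP])
    show "T ` P \<subseteq> P"
    proof
      fix g assume "g \<in> T ` P"
      then obtain h where h: "h \<in> P" "g = T h" by blast
      have hj: "h j \<in> {1..n}" if "j < n" for j using PiE_mem[OF h(1)[unfolded P_def], of j] that by simp
      have hu: "h j = undefined" if "j \<notin> {..<n}" for j using PiE_arb[OF h(1)[unfolded P_def] that] .
      have n0: "n > 0" using assms(2) by simp
      show "g \<in> P" unfolding P_def
      proof (rule PiE_I)
        fix j assume j: "j \<in> {..<n}"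
        show "g j \<in> {1..n}"
        proof (cases "j \<in> I")
          case True
          have "h j mod n < n" using n0 by (rule mod_less_divisor)
          then show ?thesis using True unfolding h(2) T_def by simp
        next
          case False
          then show ?thesis using hj j unfolding h(2) T_def by simp
        qed
      next
        fix j assume j: "j \<notin> {..<n}"
        then have "j \<notin> I" using assms(3) by blast
        then show "g j = undefined" using hu j unfolding h(2) T_def by simp
      qed
    qed
    show "inj_on T P" by (rule injT)
  qed
  have wT: "w (T h) = \<omega> ^ card I * w h" if hP: "h \<in> P" for h
  proof -
    have "\<omega> ^ (T h j) = (if j \<in> I then \<omega> else 1) * \<omega> ^ (h j)" if j: "j \<in> {..<n}" for j
    proof (cases "j \<in> I")
      case True
      have "h j \<in> {1..n}" using PiE_mem[OF hP[unfolded P_def] j] .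
      then show ?thesis using True rot_omega[OF wn] unfolding T_def by simp
    next
      case False then show ?thesis unfolding T_def by simp
    qed
    then have "w (T h) = (\<Prod>j<n. (if j \<in> I then \<omega> else 1) * \<omega> ^ (h j))"
      unfolding w_def by (rule prod.cong[OF refl])
    also have "\<dots> = (\<Prod>j<n. (if j \<in> I then \<omega> else 1)) * w h"
      unfolding w_def by (rule prod.distrib)
    also have "(\<Prod>j<n. (if j \<in> I then \<omega> else 1)) = (\<Prod>j\<in>{..<n} \<inter> {j. j \<in> I}. \<omega>)"
      by (simp add: prod.If_cases)
    also have "{..<n} \<inter> {j. j \<in> I} = I" using assms(3) by blast
    finally show ?thesis by simp
  qed
  have YT: "phit (Y (T h)) = phit (Y h)" if hP: "h \<in> P" for h
  proof -
    have hv: "h j \<in> {1..n}" if "j \<in> I" for j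
      using PiE_mem[OF hP[unfolded P_def], of j] that assms(3) by blast
    have rI: "restrict_part (kernel_part n (T h)) I = restrict_part (kernel_part n h) I"
    proof -
      have "(\<lambda>i. {j\<in>I. T h j = T h i}) ` I = (\<lambda>i. {j\<in>I. h j = h i}) ` I"
      proof (rule image_cong[OF refl], rule Collect_cong)
        fix i j assume i: "i \<in> I"
        show "(j \<in> I \<and> T h j = T h i) = (j \<in> I \<and> h j = h i)"
        proof
          assume a: "j \<in> I \<and> T h j = T h i"
          then have "h j mod n + 1 = h i mod n + 1" using i unfolding T_def by (simp split: if_splits)
          then have "h j = h i" using rot_inj[OF hv hv] a i by blast
          then show "j \<in> I \<and> h j = h i" using a by blast
        next
          assume a: "j \<in> I \<and> h j = h i"
          then show "j \<in> I \<and> T h j = T h i" using i unfolding T_def by simp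
        qed
      qed
      then show ?thesis using restrict_kernel[OF assms(3)] by simp
    qed
    have rJ: "restrict_part (kernel_part n (T h)) ({..<n} - I) = restrict_part (kernel_part n h) ({..<n} - I)"
    proof -
      have "(\<lambda>i. {j\<in>{..<n} - I. T h j = T h i}) ` ({..<n} - I) = (\<lambda>i. {j\<in>{..<n} - I. h j = h i}) ` ({..<n} - I)"
        unfolding T_def by (rule image_cong[OF refl], rule Collect_cong) auto
      moreover have "{..<n} - I \<subseteq> {..<n}" by blast
      ultimately show ?thesis using restrict_kernel[where I="{..<n} - I" and n=n] by simp
    qed
    have "phi_part phit iota n (kernel_part n (T h)) X = phi_part phit iota n (kernel_part n h) X"
      apply (rule assms(6)[unfolded E_indep_def, rule_format, of I "{..<n} - I" n X])
      using assms(3) rI rJ partition_kernel by (auto intro: gen_alg.base)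
    then show ?thesis unfolding Y_def using phit_phi_part[OF ex] by simp
  qed
  have "S = (\<Sum>h\<in>T ` P. w h * phit (Y h))" unfolding S_def TP ..
  also have "\<dots> = (\<Sum>h\<in>P. w (T h) * phit (Y (T h)))" by (simp add: sum.reindex[OF injT])
  also have "\<dots> = (\<Sum>h\<in>P. \<omega> ^ card I * (w h * phit (Y h)))" by (rule sum.cong) (simp_all add: wT YT)
  also have "\<dots> = \<omega> ^ card I * S" unfolding S_def by (simp add: sum_distrib_left)
  finally have "(1 - \<omega> ^ card I) * S = 0" by (simp add: algebra_simps)
  moreover have "\<omega> ^ card I \<noteq> 1"
  proof -
    have "I \<subset> {..<n}" using assms(3,5) by blast
    then have "card I < n" using psubset_card_mono[of "{..<n}" I] by simp
    moreover have "card I > 0" using assms(3,4) finite_subset[OF assms(3)] by (simp add: card_gt_0_iff)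
    ultimately show ?thesis using assms(7) unfolding prim_root_def by blast
  qed
  ultimately have "S = 0" by simp
  then show ?thesis unfolding cumulant_def main by simp
qed

end
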